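(* Fix $h_{pd},h_{ps},h_{sd}\in(0,1]$, $\lambda_p,\lambda_s\in(0,1)$, $\psi>0$ and $\mu_p\in[h_{pd},h_{pd}+(1-h_{pd})h_{ps}]$ with $\mu_p>\lambda_p$. Let P2 be: maximize $b\,h_{sd}(1-\lambda_p/\mu_p)$ over $b\in[0,1]$ subject to $\phi_\psi(b)\le 0$; and P4 be: minimize $N_s(b)/\lambda_s$ over $b\in[0,1]$ subject to $\phi_\psi(b)\le 0$ and $b\,h_{sd}(\mu_p-\lambda_p)>\lambda_s\mu_p$. Suppose P2 has an optimal solution $b^*(\mu_p)$ with $b^*(\mu_p)\,h_{sd}(\mu_p-\lambda_p)>\lambda_s\mu_p$. Then $b^*(\mu_p)$ is the (unique) optimal solution of P4; i.e., for fixed $\mu_p$, maximizing the SU throughput and minimizing the average SU packet delay under the PU delay constraint yield the same optimal $b$.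
   Context: Model: PU queue $Q_p$, SU queues $Q_s$, $Q_{sp}$; $h_{pd},h_{sd},h_{ps}$ link success probabilities; $\lambda_p,\lambda_s$ arrival rates; $b\in[0,1]$ the probability the SU serves $Q_s$ when the PU is idle; $\mu_p=h_{pd}+(1-h_{pd})h_{ps}a$ the PU service rate, $a\in[0,1]$. Write $\bar b=1-b$, $\bar\mu_p=1-\mu_p$, $N_p=\frac{\lambda_p-\lambda_p^2}{\mu_p-\lambda_p}$, $$\phi_\psi(b)=\lambda_p(\mu_p-h_{pd})\big(\bar b h_{sd}\bar\mu_p\lambda_p-(\mu_p-h_{pd})\mu_p\lambda_p-h_{pd}\lambda_p+\mu_p^2\big)-\mu_p(\mu_p-\lambda_p)\big(\bar b h_{sd}(\mu_p-\lambda_p)-\lambda_p(\mu_p-h_{pd})\big)(\lambda_p\psi-N_p),$$ $$N_s(b)=\frac{b\,h_{sd}\lambda_p\lambda_s(1-\mu_p)+(\lambda_s-\lambda_s^2)(\mu_p-\lambda_p)\mu_p}{(\mu_p-\lambda_p)\big(b\,h_{sd}(\mu_p-\lambda_p)-\lambda_s\mu_p\big)}.$$ *)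

theory Defs
  imports Complex_Main
begin

definition Np :: "real \<Rightarrow> real \<Rightarrow> real" where
  "Np lp mp = (lp - lp^2) / (mp - lp)"

definition phi :: "real \<Rightarrow> real \<Rightarrow> real \<Rightarrow> real \<Rightarrow> real \<Rightarrow> real \<Rightarrow> real" where
  "phi hpd hsd lp mp psi b =
     lp * (mp - hpd) * ((1 - b) * hsd * (1 - mp) * lp - (mp - hpd) * mp * lp - hpd * lp + mp^2)
     - mp * (mp - lp) * ((1 - b) * hsd * (mp - lp) - lp * (mp - hpd)) * (lp * psi - Np lp mp)"

definition Ns :: "real \<Rightarrow> real \<Rightarrow> real \<Rightarrow> real \<Rightarrow> real \<Rightarrow> real" where
  "Ns hsd lp ls mp b =
     (b * hsd * lp * ls * (1 - mp) + (ls - ls^2) * (mp - lp) * mp)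
     / ((mp - lp) * (b * hsd * (mp - lp) - ls * mp))"

definition feas2 :: "real \<Rightarrow> real \<Rightarrow> real \<Rightarrow> real \<Rightarrow> real \<Rightarrow> real set" where
  "feas2 hpd hsd lp mp psi = {b. 0 \<le> b \<and> b \<le> 1 \<and> phi hpd hsd lp mp psi b \<le> 0}"

definition feas4 :: "real \<Rightarrow> real \<Rightarrow> real \<Rightarrow> real \<Rightarrow> real \<Rightarrow> real \<Rightarrow> real set" where
  "feas4 hpd hsd lp ls mp psi =
     {b \<in> feas2 hpd hsd lp mp psi. b * hsd * (mp - lp) > ls * mp}"

definition opt2 :: "real \<Rightarrow> real \<Rightarrow> real \<Rightarrow> real \<Rightarrow> real \<Rightarrow> real \<Rightarrow> bool" where
  "opt2 hpd hsd lp mp psi b \<longleftrightarrow> b \<in> feas2 hpd hsd lp mp psi \<and>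
     (\<forall>b' \<in> feas2 hpd hsd lp mp psi. b' * hsd * (1 - lp / mp) \<le> b * hsd * (1 - lp / mp))"

definition opt4 :: "real \<Rightarrow> real \<Rightarrow> real \<Rightarrow> real \<Rightarrow> real \<Rightarrow> real \<Rightarrow> real \<Rightarrow> bool" where
  "opt4 hpd hsd lp ls mp psi b \<longleftrightarrow> b \<in> feas4 hpd hsd lp ls mp psi \<and>
     (\<forall>b' \<in> feas4 hpd hsd lp ls mp psi. Ns hsd lp ls mp b / ls \<le> Ns hsd lp ls mp b' / ls)"

end

theory Submission
  imports Defs
begin

lemma Ns_strict:
  fixes hsd lp ls mp b1 b2 :: real
  assumes "0 < hsd" "0 < lp" "0 < ls" "ls < 1" "mp \<le> 1" "mp > lp"
    and "b1 < b2" "b1 * hsd * (mp - lp) > ls * mp" "b2 * hsd * (mp - lp) > ls * mp"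
  shows "Ns hsd lp ls mp b2 < Ns hsd lp ls mp b1"
proof -
  define A where "A = hsd * lp * ls * (1 - mp)"
  define B where "B = (ls - ls^2) * (mp - lp) * mp"
  define C where "C = mp - lp"
  define D where "D = hsd * (mp - lp)"
  define E where "E = ls * mp"
  have A: "A \<ge> 0" using assms unfolding A_def by simp
  have E: "E > 0" using assms unfolding E_def by simp
  have B: "B > 0" using assms unfolding B_def
    by (intro mult_pos_pos) (auto simp: power2_eq_square algebra_simps)
  have D: "D > 0" using assms unfolding D_def by simp
  have C: "C > 0" using assms unfolding C_def by simp
  have d1: "D*b1 - E > 0" using assms unfolding D_def E_def by (simp add: algebra_simps)
  have d2: "D*b2 - E > 0" using assms unfolding D_def E_def by (simp add: algebra_simps)
  have key: "(A*b1+B)*(D*b2-E) - (A*b2+B)*(D*b1-E) = (A*E + B*D)*(b2-b1)"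
    by (simp add: algebra_simps)
  have pos: "(A*E + B*D)*(b2-b1) > 0"
    using A E B D assms(7) by (intro mult_pos_pos) (auto intro: add_nonneg_pos)
  have ineq: "(A*b2+B)*(C*(D*b1-E)) < (A*b1+B)*(C*(D*b2-E))"
    using key pos C by (smt (verit) mult.assoc mult.commute mult_strict_left_mono right_diff_distrib)
  have "(A*b2+B)/(C*(D*b2-E)) < (A*b1+B)/(C*(D*b1-E))"
    using ineq C d1 d2 by (simp add: divide_simps)
  moreover have "Ns hsd lp ls mp b2 = (A*b2+B)/(C*(D*b2-E))"
    "Ns hsd lp ls mp b1 = (A*b1+B)/(C*(D*b1-E))"
    unfolding Ns_def A_def B_def C_def D_def E_def by (simp_all add: algebra_simps)
  ultimately show ?thesis by simp
qed

theorem lemma2: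
  fixes hpd hps hsd lp ls psi mp bstar :: real
  assumes "0 < hpd" "hpd \<le> 1" "0 < hps" "hps \<le> 1" "0 < hsd" "hsd \<le> 1"
    and "0 < lp" "lp < 1" "0 < ls" "ls < 1" "0 < psi"
    and "hpd \<le> mp" "mp \<le> hpd + (1 - hpd) * hps" "mp > lp"
    and "opt2 hpd hsd lp mp psi bstar"
    and "bstar * hsd * (mp - lp) > ls * mp"
  shows "opt4 hpd hsd lp ls mp psi bstar \<and>
         (\<forall>b. opt4 hpd hsd lp ls mp psi b \<longrightarrow> b = bstar)"
proof -
  have mp1: "mp \<le> 1"
  proof -
    have "(1 - hpd) * hps \<le> (1 - hpd) * 1" using assms by (intro mult_left_mono) auto
    thus ?thesis using assms(13) by simp
  qed
  have mp0: "mp > 0" using assms by simp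
  have f: "1 - lp/mp > 0" using assms mp0 by (simp add: field_simps)
  have le: "b \<le> bstar" if "b \<in> feas2 hpd hsd lp mp psi" for b
  proof -
    have "b * hsd * (1 - lp / mp) \<le> bstar * hsd * (1 - lp / mp)"
      using assms(15) that unfolding opt2_def by blast
    hence "(hsd * (1 - lp/mp)) * b \<le> (hsd * (1 - lp/mp)) * bstar" by (simp add: algebra_simps)
    moreover have "hsd * (1 - lp/mp) > 0" using f assms by simp
    ultimately show ?thesis using mult_le_cancel_left_pos by blast
  qed
  have bs4: "bstar \<in> feas4 hpd hsd lp ls mp psi"
    using assms(15,16) unfolding opt2_def feas4_def by simp
  have mono: "Ns hsd lp ls mp bstar / ls \<le> Ns hsd lp ls mp b / ls"
    if "b \<in> feas4 hpd hsd lp ls mp psi" for b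
  proof (cases "b = bstar")
    case False
    with that le have "b < bstar" unfolding feas4_def by force
    hence "Ns hsd lp ls mp bstar < Ns hsd lp ls mp b"
      using Ns_strict[of hsd lp ls mp b bstar] assms mp1 that unfolding feas4_def by simp
    thus ?thesis using assms(9) by (simp add: divide_right_mono)
  qed simp
  have opt: "opt4 hpd hsd lp ls mp psi bstar" unfolding opt4_def using bs4 mono by blast
  have uniq: "b = bstar" if "opt4 hpd hsd lp ls mp psi b" for b
  proof (rule ccontr)
    assume ne: "b \<noteq> bstar"
    have b4: "b \<in> feas4 hpd hsd lp ls mp psi" using that unfolding opt4_def by simp
    with le ne have "b < bstar" unfolding feas4_def by force
    hence "Ns hsd lp ls mp bstar < Ns hsd lp ls mp b"
      using Ns_strict[of hsd lp ls mp b bstar] assms mp1 b4 unfolding feas4_def by simp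
    hence "Ns hsd lp ls mp bstar / ls < Ns hsd lp ls mp b / ls"
      using assms(9) by (simp add: divide_strict_right_mono)
    moreover have "Ns hsd lp ls mp b / ls \<le> Ns hsd lp ls mp bstar / ls"
      using that bs4 unfolding opt4_def by blast
    ultimately show False by simp
  qed
  show ?thesis using opt uniq by blast
qed

end
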